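(* Let $n\ge 3$. The wheel $W_n$ (of order $n+1$) admits an $(a,d)$-distance antimagic labeling for some integers $a$ and $d\ge0$ if and only if $3\le n\le 5$.
   Context: The wheel $W_n$ ($n\ge3$) is obtained from a cycle $x_1x_2\cdots x_nx_1$ by adding a center vertex $x_0$ adjacent to all $x_1,\dots,x_n$. For a graph $G=(V,E)$ with $v=|V|$ and a bijection $f:V\to\{1,\dots,v\}$, the vertex-weight of $x$ is $w(x)=\sum_{y\in N(x)}f(y)$ with $N(x)$ the set of neighbours of $x$. For integers $a$ and $d\ge0$, $f$ is an $(a,d)$-distance antimagic labeling if the multiset of vertex-weights equals $\{a,a+d,\dots,a+(v-1)d\}$ (for $d=0$: all weights equal). *)

theory Defs
  imports Main "HOL-Library.Multiset"
begin

text \<open>A graph is given by a finite vertex set V and a symmetric adjacency relation adj.\<close>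

definition nbhd :: "'a set \<Rightarrow> ('a \<Rightarrow> 'a \<Rightarrow> bool) \<Rightarrow> 'a \<Rightarrow> 'a set" where
  "nbhd V adj x = {y \<in> V. adj x y}"

definition vertex_weight :: "'a set \<Rightarrow> ('a \<Rightarrow> 'a \<Rightarrow> bool) \<Rightarrow> ('a \<Rightarrow> nat) \<Rightarrow> 'a \<Rightarrow> nat" where
  "vertex_weight V adj f x = (\<Sum>y\<in>nbhd V adj x. f y)"

definition distance_antimagic ::
  "'a set \<Rightarrow> ('a \<Rightarrow> 'a \<Rightarrow> bool) \<Rightarrow> ('a \<Rightarrow> nat) \<Rightarrow> int \<Rightarrow> int \<Rightarrow> bool" where
  "distance_antimagic V adj f a d \<longleftrightarrow>
     bij_betw f V {1..card V} \<and>
     image_mset (\<lambda>x. int (vertex_weight V adj f x)) (mset_set V)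
       = mset (map (\<lambda>i. a + int i * d) [0..<card V])"

text \<open>Wheel W_n: vertices 0..n, centre 0, rim cycle 1-2-...-n-1.\<close>
definition wheel_vertices :: "nat \<Rightarrow> nat set" where
  "wheel_vertices n = {0..n}"

definition wheel_adj :: "nat \<Rightarrow> nat \<Rightarrow> nat \<Rightarrow> bool" where
  "wheel_adj n x y \<longleftrightarrow>
     (x = 0 \<and> y \<in> {1..n}) \<or> (y = 0 \<and> x \<in> {1..n}) \<or>
     (x \<in> {1..n} \<and> y \<in> {1..n} \<and> (y = x mod n + 1 \<or> x = y mod n + 1))"

end

theory Submission imports Defs begin

definition prv :: "nat \<Rightarrow> nat \<Rightarrow> nat" where "prv n i = (if i = 1 then n else i - 1)"
definition nxt :: "nat \<Rightarrow> nat \<Rightarrow> nat" where "nxt n i = (if i = n then 1 else i + 1)"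

lemma modsuc: "y \<in> {1..n} \<Longrightarrow> y mod n + 1 = nxt n y"
  unfolding nxt_def by (auto simp: le_less)

lemma nbhd_center: "n \<ge> 3 \<Longrightarrow> nbhd {0..n} (wheel_adj n) 0 = {1..n}"
  unfolding nbhd_def wheel_adj_def by auto

lemma nbhd_rim: assumes "n \<ge> 3" "1 \<le> i" "i \<le> n"
  shows "nbhd {0..n} (wheel_adj n) i = {0, prv n i, nxt n i}"
proof -
  have "\<And>y. y \<in> {1..n} \<Longrightarrow> (y = i mod n + 1 \<or> i = y mod n + 1) \<longleftrightarrow> (y = prv n i \<or> y = nxt n i)"
  proof -
    fix y assume y: "y \<in> {1..n}"
    have "y mod n + 1 = nxt n y" "i mod n + 1 = nxt n i" using modsuc[of y n] modsuc[of i n] y assms by auto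
    then show "(y = i mod n + 1 \<or> i = y mod n + 1) \<longleftrightarrow> (y = prv n i \<or> y = nxt n i)"
      using y assms by (auto simp: prv_def nxt_def split: if_splits)
  qed
  note key = this
  have pn: "prv n i \<in> {1..n}" "nxt n i \<in> {1..n}" using assms by (auto simp: prv_def nxt_def)
  show ?thesis
  proof (rule set_eqI)
    fix y
    show "y \<in> nbhd {0..n} (wheel_adj n) i \<longleftrightarrow> y \<in> {0, prv n i, nxt n i}"
    proof (cases "y = 0")
      case True then show ?thesis using assms pn by (auto simp: nbhd_def wheel_adj_def)
    next
      case False
      have "y \<in> nbhd {0..n} (wheel_adj n) i \<longleftrightarrow> y \<in> {1..n} \<and> (y = i mod n + 1 \<or> i = y mod n + 1)"
        using False assms by (auto simp: nbhd_def wheel_adj_def)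
      also have "\<dots> \<longleftrightarrow> y \<in> {1..n} \<and> (y = prv n i \<or> y = nxt n i)" using key by blast
      also have "\<dots> \<longleftrightarrow> y \<in> {0, prv n i, nxt n i}" using False pn by auto
      finally show ?thesis .
    qed
  qed
qed

lemma weight_center: "n \<ge> 3 \<Longrightarrow> vertex_weight {0..n} (wheel_adj n) f 0 = (\<Sum>y\<in>{1..n}. f y)"
  by (simp add: vertex_weight_def nbhd_center)

lemma weight_rim: assumes "n \<ge> 3" "1 \<le> i" "i \<le> n"
  shows "vertex_weight {0..n} (wheel_adj n) f i = f 0 + f (prv n i) + f (nxt n i)"
    and "prv n i \<in> {1..n}" "nxt n i \<in> {1..n}" "prv n i \<noteq> nxt n i"
proof -
  show p: "prv n i \<in> {1..n}" "nxt n i \<in> {1..n}" "prv n i \<noteq> nxt n i"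
    using assms by (auto simp: prv_def nxt_def)
  then show "vertex_weight {0..n} (wheel_adj n) f i = f 0 + f (prv n i) + f (nxt n i)"
    using assms by (simp add: vertex_weight_def nbhd_rim)
qed

lemma three_distinct: "x \<noteq> y \<Longrightarrow> x \<noteq> z \<Longrightarrow> y \<noteq> z \<Longrightarrow> 1 \<le> x \<Longrightarrow> 1 \<le> y \<Longrightarrow> 1 \<le> z
  \<Longrightarrow> x \<le> n + 1 \<Longrightarrow> y \<le> n + 1 \<Longrightarrow> z \<le> n + 1 \<Longrightarrow> 6 \<le> x + y + (z::nat) \<and> x + y + z \<le> 3 * n"
  by linarith

lemma no_labeling:
  assumes n6: "n \<ge> 6" and d0: "d \<ge> 0" and DA: "distance_antimagic {0..n} (wheel_adj n) f a d"
  shows False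
proof -
  define wt where "wt = vertex_weight {0..n} (wheel_adj n) f"
  have n3: "n \<ge> 3" using n6 by simp
  have cardV: "card {0..n} = Suc n" by simp
  have bij: "bij_betw f {0..n} {1..Suc n}" using DA cardV by (simp add: distance_antimagic_def)
  have ms: "image_mset (\<lambda>x. int (wt x)) (mset_set {0..n}) = mset (map (\<lambda>i. a + int i * d) [0..<Suc n])"
    using DA cardV by (simp add: distance_antimagic_def wt_def)
  have rng: "\<And>x. x \<in> {0..n} \<Longrightarrow> 1 \<le> f x \<and> f x \<le> n + 1"
    using bij by (auto simp: bij_betw_def)
  have inj: "inj_on f {0..n}" using bij by (simp add: bij_betw_def)
  have "sum f {0..n} = sum (\<lambda>i. i) {1..Suc n}" using sum.reindex_bij_betw[OF bij, of "\<lambda>i. i"] by simp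
  moreover have "2 * sum (\<lambda>i. i) {1..Suc n} = Suc n * (Suc n + 1)"
    using double_gauss_sum_from_Suc_0[where 'a=nat, of "Suc n"] by simp
  moreover have "sum f {0..n} = f 0 + sum f {1..n}" by (simp add: sum.atLeast_Suc_atMost)
  ultimately have w0eq: "2 * wt 0 + 2 * f 0 = Suc n * (Suc n + 1)"
    using weight_center[OF n3, of f] by (simp add: wt_def)
  have f0: "f 0 \<le> n + 1" using rng by simp
  have NN: "n * n \<ge> 6 * n" using n6 by simp
  have "Suc n * (Suc n + 1) = n * n + 3 * n + 2" by (simp add: algebra_simps)
  then have w0b: "2 * wt 0 \<ge> 7 * n" using w0eq f0 NN by linarith
  have rim: "6 \<le> wt i \<and> wt i \<le> 3 * n" if "1 \<le> i" "i \<le> n" for i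
  proof -
    note W = weight_rim(1)[OF n3 that, of f] weight_rim(2-4)[OF n3 that]
    have "f 0 \<noteq> f (prv n i)" "f 0 \<noteq> f (nxt n i)" "f (prv n i) \<noteq> f (nxt n i)"
      using W(2-4) by (auto simp: inj_on_eq_iff[OF inj])
    moreover have "1 \<le> f 0 \<and> f 0 \<le> n + 1" "1 \<le> f (prv n i) \<and> f (prv n i) \<le> n + 1"
       "1 \<le> f (nxt n i) \<and> f (nxt n i) \<le> n + 1" using W rng by auto
    ultimately show ?thesis using W(1) three_distinct unfolding wt_def by metis
  qed
  have rimlt: "int (wt i) < int (wt 0)" if "1 \<le> i" "i \<le> n" for i
    using rim[OF that] w0b by simp
  have setq: "(\<lambda>x. int (wt x)) ` {0..n} = (\<lambda>i. a + int i * d) ` {0..<Suc n}"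
    using arg_cong[OF ms, of set_mset] by (simp del: upt_Suc)
  have E1: "\<exists>k<Suc n. int (wt x) = a + int k * d" if "x \<in> {0..n}" for x
  proof -
    have "int (wt x) \<in> (\<lambda>i. a + int i * d) ` {0..<Suc n}" using that setq by blast
    then show ?thesis by auto
  qed
  have E2: "\<exists>x\<in>{0..n}. int (wt x) = a + int k * d" if "k < Suc n" for k
  proof -
    have "a + int k * d \<in> (\<lambda>x. int (wt x)) ` {0..n}" using that setq by auto
    then show ?thesis by auto
  qed
  obtain k0 where k0: "k0 < Suc n" "int (wt 0) = a + int k0 * d" using E1[of 0] by auto
  have "int k0 * d \<le> int n * d" using k0(1) d0 by (intro mult_right_mono) auto
  obtain v where v: "v \<in> {0..n}" "int (wt v) = a + int n * d" using E2[of n] by auto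
  have v0: "v = 0"
  proof (rule ccontr)
    assume "v \<noteq> 0"
    then have "int (wt v) < int (wt 0)" using v(1) by (intro rimlt) auto
    then show False using v k0 \<open>int k0 * d \<le> int n * d\<close> by linarith
  qed
  have c: "int (wt 0) = a + int n * d" using v v0 by simp
  obtain v' where v': "v' \<in> {0..n}" "int (wt v') = a + int (n - 1) * d" using E2[of "n-1"] by fastforce
  have nm1: "int (n - 1) = int n - 1" using n6 by simp
  show False
  proof (cases "v' = 0")
    case True
    then have "d = 0" using c v' nm1 by (simp add: algebra_simps)
    obtain k1 where "int (wt 1) = a + int k1 * d" using E1[of 1] n6 by auto
    then show False using rimlt[of 1] n6 c \<open>d = 0\<close> by simp
  next
    case False
    then have rv: "6 \<le> wt v' \<and> wt v' \<le> 3 * n" using rim v' by auto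
    have "d = int (wt 0) - int (wt v')" using c v' nm1 by (simp add: algebra_simps)
    then have d3: "d \<ge> 3" using rv w0b n6 by linarith
    obtain u where u: "u \<in> {0..n}" "int (wt u) = a" using E2[of 0] by auto
    have "(int n - 1) * 3 \<le> (int n - 1) * d" using d3 n6 by (intro mult_left_mono) auto
    show False
    proof (cases "u = 0")
      case True
      then have "int n * d = 0" using c u by simp
      then show False using d3 n6 by simp
    next
      case False
      then have "6 \<le> wt u" using rim u by auto
      then show False using rv v' u nm1 \<open>(int n - 1) * 3 \<le> (int n - 1) * d\<close>
        by (simp add: algebra_simps)
    qed
  qed
qed

lemma da_iff:
  "distance_antimagic {0..n} adj f a d \<longleftrightarrow> bij_betw f {0..n} {1..Suc n} \<and>
     mset (map (\<lambda>x. int (vertex_weight {0..n} adj f x)) [0..<Suc n]) = mset (map (\<lambda>i. a + int i * d) [0..<Suc n])"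
proof -
  have "mset_set {0..n} = mset [0..<Suc n]"
    using mset_set_set[of "[0..<Suc n]"] by (simp add: atLeastLessThanSuc_atLeastAtMost del: upt_Suc)
  then show ?thesis by (simp add: distance_antimagic_def del: upt_Suc)
qed

lemma W3: "distance_antimagic {0..3} (wheel_adj 3) (\<lambda>i. i + 1) 6 1"
proof -
  let ?w = "vertex_weight {0..3} (wheel_adj 3) (\<lambda>i::nat. i + 1)"
  have "?w 0 = 9" by (simp add: weight_center numeral_eq_Suc)
  moreover have "?w 1 = 8" "?w 2 = 7" "?w 3 = 6"
    by (subst weight_rim; simp add: prv_def nxt_def)+
  moreover have "bij_betw (\<lambda>i::nat. i + 1) {0..3} {1..Suc 3}"
    by (simp add: bij_betw_def inj_on_def image_Suc_atLeastAtMost)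
  ultimately show ?thesis unfolding da_iff by (simp add: numeral_eq_Suc)
qed

lemma W4: "distance_antimagic {0..4} (wheel_adj 4) (\<lambda>i. [5,1,2,4,3::nat] ! i) 10 0"
proof -
  let ?w = "vertex_weight {0..4} (wheel_adj 4) (\<lambda>i. [5,1,2,4,3::nat] ! i)"
  have "?w 0 = 10" by (simp add: weight_center numeral_eq_Suc)
  moreover have "?w 1 = 10" "?w 2 = 10" "?w 3 = 10" "?w 4 = 10"
    by (subst weight_rim; simp add: prv_def nxt_def)+
  moreover have "bij_betw (\<lambda>i. [5,1,2,4,3::nat] ! i) {0..4} {1..Suc 4}"
    by (simp add: bij_betw_def inj_on_def numeral_eq_Suc atLeastAtMostSuc_conv insert_commute)
  ultimately show ?thesis unfolding da_iff by (simp add: numeral_eq_Suc)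
qed

lemma W5: "distance_antimagic {0..5} (wheel_adj 5) (\<lambda>i. if i = 0 then 6 else i) 10 1"
proof -
  let ?w = "vertex_weight {0..5} (wheel_adj 5) (\<lambda>i::nat. if i = 0 then 6 else i)"
  have "?w 0 = 15" by (simp add: weight_center numeral_eq_Suc)
  moreover have "?w 1 = 13" "?w 2 = 10" "?w 3 = 12" "?w 4 = 14" "?w 5 = 11"
    by (subst weight_rim; simp add: prv_def nxt_def)+
  moreover have "bij_betw (\<lambda>i::nat. if i = 0 then 6 else i) {0..5} {1..Suc 5}"
    by (simp add: bij_betw_def inj_on_def numeral_eq_Suc atLeastAtMostSuc_conv insert_commute)
  ultimately show ?thesis unfolding da_iff by (simp add: numeral_eq_Suc add_mset_commute)
qed

theorem mainTheorem11:
  fixes n :: nat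
  assumes "n \<ge> 3"
  shows "(\<exists>f a d. d \<ge> 0 \<and> distance_antimagic (wheel_vertices n) (wheel_adj n) f a d)
         \<longleftrightarrow> n \<le> 5"
proof
  assume "\<exists>f a d. d \<ge> 0 \<and> distance_antimagic (wheel_vertices n) (wheel_adj n) f a d"
  then obtain f a d where "d \<ge> 0" "distance_antimagic {0..n} (wheel_adj n) f a d"
    by (auto simp: wheel_vertices_def)
  show "n \<le> 5" proof (rule ccontr)
    assume "\<not> n \<le> 5"
    then have "n \<ge> 6" by simp
    then show False using no_labeling \<open>d \<ge> 0\<close> \<open>distance_antimagic {0..n} (wheel_adj n) f a d\<close> by blast
  qed
next
  assume "n \<le> 5"
  then have "n = 3 \<or> n = 4 \<or> n = 5" using assms by auto
  then show "\<exists>f a d. d \<ge> 0 \<and> distance_antimagic (wheel_vertices n) (wheel_adj n) f a d"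
  proof (elim disjE)
    assume "n = 3" then show ?thesis using W3 unfolding wheel_vertices_def by (intro exI[of _ "\<lambda>i. i + 1"] exI[of _ 6] exI[of _ 1]) simp
  next
    assume "n = 4" then show ?thesis using W4 unfolding wheel_vertices_def by (intro exI[of _ "\<lambda>i. [5,1,2,4,3::nat] ! i"] exI[of _ 10] exI[of _ 0]) simp
  next
    assume "n = 5" then show ?thesis using W5 unfolding wheel_vertices_def by (intro exI[of _ "\<lambda>i::nat. if i = 0 then 6 else i"] exI[of _ 10] exI[of _ 1]) simp
  qed
qed

end
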